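(* Let $D=0.5$, $N_p\ge1$, and let $p_1,\dots,p_{N_p}$ be the PWM basis functions defined in the context. Let $f:[0,1]\to\mathbb R$ be any function such that: the restriction of $f$ to $[0,0.5)$ coincides with a polynomial of degree at most $N_p$; $f$ is continuous at $\tau=0.5$; and $f(\tau+0.5)=-f(\tau)$ for all $\tau\in[0,0.5]$. Then $f$ is a linear combination of $p_1,\dots,p_{N_p}$.
   Context: The PWM basis functions with duty cycle $D\in(0,1)$ are functions of the relative time $\tau\in[0,1]$, defined recursively as follows. Set $p_0(\tau)=1$ on $[0,1]$, and $$p_1(\tau)=\begin{cases}\sqrt3\,\dfrac{2\tau-D}{D}, & 0\le\tau\le D,\\[2mm] \sqrt3\,\dfrac{1+D-2\tau}{1-D}, & D\le\tau\le 1.\end{cases}$$ For $k\ge2$, define $p_k^\star(\tau)=\int_D^\tau p_{k-1}(\tau')\,d\tau'$, then $$\overline p_k(\tau)=p_k^\star(\tau)-\sum_{l=0}^{k-1}p_l(\tau)\int_0^1 p_l(s)\,p_k^\star(s)\,ds,\qquad p_k(\tau)=\frac{\overline p_k(\tau)}{\left(\int_0^1\overline p_k(s)^2\,ds\right)^{1/2}}.$$ *)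

theory Defs
  imports "HOL-Analysis.Analysis" "HOL-Computational_Algebra.Polynomial"
begin

definition oint :: "real \<Rightarrow> real \<Rightarrow> (real \<Rightarrow> real) \<Rightarrow> real" where
  "oint a b f = (if a \<le> b then integral {a..b} f else - integral {b..a} f)"

function pwm :: "real \<Rightarrow> nat \<Rightarrow> real \<Rightarrow> real" where
  "pwm D 0 = (\<lambda>\<tau>. 1)"
| "pwm D (Suc 0) = (\<lambda>\<tau>. if \<tau> \<le> D then sqrt 3 * (2 * \<tau> - D) / D
                           else sqrt 3 * (1 + D - 2 * \<tau>) / (1 - D))"
| "pwm D (Suc (Suc k)) =
     (let ps = (\<lambda>\<tau>. oint D \<tau> (pwm D (Suc k)));
          pb = (\<lambda>\<tau>. ps \<tau> - (\<Sum>l<Suc (Suc k).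
                   pwm D l \<tau> * integral {0..1} (\<lambda>s. pwm D l s * ps s)))
      in (\<lambda>\<tau>. pb \<tau> / sqrt (integral {0..1} (\<lambda>s. (pb s)\<^sup>2))))"
  by pat_completeness auto
termination by (relation "Wellfounded.measure (\<lambda>(D, k). k)") auto

end

theory Submission imports Defs begin

lemma poly_antideriv: fixes q :: "real poly" shows "\<exists>Q. pderiv Q = q"
proof -
  let ?Q = "\<Sum>i\<le>degree q. monom (coeff q i / real (Suc i)) (Suc i)"
  have "pderiv ?Q = (\<Sum>i\<le>degree q. pderiv (monom (coeff q i / real (Suc i)) (Suc i)))"
    using higher_pderiv_sum[of 1] by simp
  also have "\<dots> = (\<Sum>i\<le>degree q. monom (coeff q i) i)"
    by (simp add: pderiv_monom)
  also have "\<dots> = q" by (rule poly_as_sum_of_monoms)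
  finally show ?thesis by blast
qed

lemma poly_antideriv_deg: fixes q Q :: "real poly"
  assumes "pderiv Q = q" "q \<noteq> 0" shows "degree Q = degree q + 1"
proof -
  have "degree Q \<noteq> 0" using assms pderiv_eq_0_iff by metis
  then show ?thesis using degree_pderiv[of Q] assms by simp
qed

lemma limit_value:
  fixes g :: "real \<Rightarrow> real" and q :: "real poly"
  assumes "continuous (at (1/2) within {0..1}) g" "\<forall>\<tau>\<in>{0..<1/2}. g \<tau> = poly q \<tau>"
  shows "g (1/2) = poly q (1/2)"
proof -
  have "(g \<longlongrightarrow> g (1/2)) (at (1/2) within {0..<1/2})"
    using assms(1) unfolding continuous_within
    by (rule tendsto_within_subset) auto
  moreover have "(g \<longlongrightarrow> poly q (1/2)) (at (1/2) within {0..<1/2})"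
  proof -
    have "(poly q \<longlongrightarrow> poly q (1/2)) (at (1/2) within {0..<1/2})"
      by (intro tendsto_intros)
    then show ?thesis
      by (rule Lim_transform_within[where d=1]) (use assms(2) in auto)
  qed
  moreover have "(1/2::real) islimpt {0..<1/2}" by simp
  then have "at (1/2::real) within {0..<1/2} \<noteq> bot"
    using trivial_limit_within by blast
  ultimately show ?thesis using tendsto_unique by blast
qed

lemma integrable01: "continuous_on {0..1} (f::real\<Rightarrow>real) \<Longrightarrow> f integrable_on {0..1}"
  by (simp add: integrable_continuous_interval)

lemma oint_eq:
  assumes "continuous_on {0..1} g" "\<tau> \<in> {0..1}" 
  shows "oint (1/2) \<tau> g = integral {0..\<tau>} g - integral {0..1/2} g"
proof (cases "1/2 \<le> \<tau>")
  case True
  have "integral {0..1/2} g + integral {1/2..\<tau>} g = integral {0..\<tau>} g"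
  proof (rule Henstock_Kurzweil_Integration.integral_combine)
    have "continuous_on {0..\<tau>} g" using assms(1) by (rule continuous_on_subset) (use assms in auto)
    then show "g integrable_on {0..\<tau>}" by (rule integrable_continuous_interval)
  qed (use True in auto)
  then show ?thesis using True by (simp add: oint_def)
next
  case False
  have "integral {0..\<tau>} g + integral {\<tau>..1/2} g = integral {0..1/2} g"
  proof (rule Henstock_Kurzweil_Integration.integral_combine)
    have "continuous_on {0..1/2} g" using assms(1) by (rule continuous_on_subset) (use assms in auto)
    then show "g integrable_on {0..1/2}" by (rule integrable_continuous_interval)
  qed (use False assms in auto)
  then show ?thesis using False by (simp add: oint_def)
qed


definition antip :: "(real \<Rightarrow> real) \<Rightarrow> bool" where
  "antip g \<longleftrightarrow> (\<forall>\<tau>\<in>{0..1/2}. g (\<tau>+1/2) = - g \<tau>)"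

lemma shift_deriv:
  assumes "(f has_real_derivative f') (at (\<tau>+1/2) within {0..1})"
  shows "((\<lambda>t. f (t+1/2)) has_real_derivative f') (at \<tau> within {0..1/2})"
proof -
  have "(f has_real_derivative f') (at ((\<lambda>t. t+1/2) \<tau>) within ((\<lambda>t. t+1/2) ` {0..1/2}))"
    using assms by (rule DERIV_subset) auto
  moreover have "((\<lambda>t::real. t+1/2) has_real_derivative 1) (at \<tau> within {0..1/2})"
    by (auto intro!: derivative_eq_intros)
  ultimately have "(f \<circ> (\<lambda>t. t+1/2) has_real_derivative f' * 1) (at \<tau> within {0..1/2})"
    by (rule DERIV_image_chain)
  then show ?thesis by (simp add: o_def)
qed

lemma ps_props:
  fixes g :: "real \<Rightarrow> real" and q :: "real poly"
  assumes cg: "continuous_on {0..1} g" and ag: "antip g"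
    and qg: "\<forall>\<tau>\<in>{0..<1/2}. g \<tau> = poly q \<tau>" and q0: "q \<noteq> 0"
  defines "Ps \<equiv> (\<lambda>\<tau>. integral {0..\<tau>} g - integral {0..1/2} g)"
  shows "continuous_on {0..1} Ps"
    and "\<exists>Q. degree Q = degree q + 1 \<and> (\<forall>\<tau>\<in>{0..<1/2}. Ps \<tau> = poly Q \<tau>)"
    and "\<exists>C. (\<forall>\<tau>\<in>{0..1/2}. Ps \<tau> + Ps (\<tau>+1/2) = C) \<and> integral {0..1} Ps = C/2"
proof -
  have dP: "(Ps has_real_derivative g \<tau>) (at \<tau> within {0..1})" if "\<tau> \<in> {0..1}" for \<tau>
    unfolding Ps_def
    using DERIV_diff[OF integral_has_real_derivative[OF cg that] DERIV_const[of "integral {0..1/2} g"]]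
    by simp
  show cP: "continuous_on {0..1} Ps" by (rule DERIV_continuous_on[OF dP])
  show "\<exists>Q. degree Q = degree q + 1 \<and> (\<forall>\<tau>\<in>{0..<1/2}. Ps \<tau> = poly Q \<tau>)"
  proof -
    obtain Q0 where Q0: "pderiv Q0 = q" using poly_antideriv by blast
    have dQ0: "degree Q0 = degree q + 1" using poly_antideriv_deg[OF Q0 q0] .
    have "((\<lambda>\<tau>. Ps \<tau> - poly Q0 \<tau>) has_real_derivative 0) (at \<tau> within {0..<1/2})"
      if "\<tau> \<in> {0..<1/2}" for \<tau>
    proof -
      have "(Ps has_real_derivative g \<tau>) (at \<tau> within {0..<1/2})"
        by (rule DERIV_subset[OF dP]) (use that in auto)
      moreover have "(poly Q0 has_real_derivative poly q \<tau>) (at \<tau> within {0..<1/2})"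
        using poly_DERIV[of Q0 \<tau>] Q0 by (auto intro: has_field_derivative_at_within)
      ultimately show ?thesis using DERIV_diff qg that by fastforce
    qed
    note dz = this
    have "\<exists>c. \<forall>\<tau>\<in>{0..<1/2}. Ps \<tau> - poly Q0 \<tau> = c" by (rule has_field_derivative_zero_constant) (use dz in auto)
    then obtain c where c: "\<forall>\<tau>\<in>{0..<1/2}. Ps \<tau> - poly Q0 \<tau> = c" by blast
    have "degree (Q0 + [:c:]) = degree Q0" by (rule degree_add_eq_left) (use dQ0 in simp)
    then show ?thesis using c dQ0 by (intro exI[of _ "Q0 + [:c:]"]) (auto simp: algebra_simps)
  qed
  have "((\<lambda>\<tau>. Ps \<tau> + Ps (\<tau>+1/2)) has_real_derivative 0) (at \<tau> within {0..1/2})"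
    if "\<tau> \<in> {0..1/2}" for \<tau>
  proof -
    have "(Ps has_real_derivative g \<tau>) (at \<tau> within {0..1/2})"
      by (rule DERIV_subset[OF dP]) (use that in auto)
    moreover have "((\<lambda>t. Ps (t+1/2)) has_real_derivative g (\<tau>+1/2)) (at \<tau> within {0..1/2})"
      by (rule shift_deriv, rule dP) (use that in auto)
    ultimately show ?thesis using DERIV_add ag that unfolding antip_def by fastforce
  qed
  note dz = this
  have "\<exists>C. \<forall>\<tau>\<in>{0..1/2}. Ps \<tau> + Ps (\<tau>+1/2) = C" by (rule has_field_derivative_zero_constant) (use dz in auto)
  then obtain C where C: "\<forall>\<tau>\<in>{0..1/2}. Ps \<tau> + Ps (\<tau>+1/2) = C" by blast
  define H where "H = (\<lambda>\<tau>. integral {0..\<tau>} Ps)"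
  have dH: "(H has_real_derivative Ps \<tau>) (at \<tau> within {0..1})" if "\<tau> \<in> {0..1}" for \<tau>
    unfolding H_def using integral_has_real_derivative[OF cP that] .
  have "((\<lambda>\<tau>. H \<tau> + H (\<tau>+1/2) - C * \<tau>) has_real_derivative 0) (at \<tau> within {0..1/2})"
    if "\<tau> \<in> {0..1/2}" for \<tau>
  proof -
    have "(H has_real_derivative Ps \<tau>) (at \<tau> within {0..1/2})"
      by (rule DERIV_subset[OF dH]) (use that in auto)
    moreover have "((\<lambda>t. H (t+1/2)) has_real_derivative Ps (\<tau>+1/2)) (at \<tau> within {0..1/2})"
      by (rule shift_deriv, rule dH) (use that in auto)
    moreover have "((\<lambda>t. C * t) has_real_derivative C) (at \<tau> within {0..1/2})"
      by (auto intro!: derivative_eq_intros)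
    ultimately have "((\<lambda>\<tau>. H \<tau> + H (\<tau>+1/2) - C * \<tau>) has_real_derivative Ps \<tau> + Ps (\<tau>+1/2) - C) (at \<tau> within {0..1/2})"
      by (intro DERIV_diff DERIV_add)
    then show ?thesis using C that by simp
  qed
  note dz = this
  have "\<exists>c. \<forall>\<tau>\<in>{0..1/2}. H \<tau> + H (\<tau>+1/2) - C * \<tau> = c" by (rule has_field_derivative_zero_constant) (use dz in auto)
  then obtain c where c: "\<forall>\<tau>\<in>{0..1/2}. H \<tau> + H (\<tau>+1/2) - C * \<tau> = c" by blast
  from c[rule_format, of 0] c[rule_format, of "1/2"] have "H 1 = C/2"
    by (simp add: H_def)
  then show "\<exists>C. (\<forall>\<tau>\<in>{0..1/2}. Ps \<tau> + Ps (\<tau>+1/2) = C) \<and> integral {0..1} Ps = C/2"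
    using C by (auto simp: H_def)
qed


definition goodp :: "nat \<Rightarrow> bool" where
  "goodp k \<longleftrightarrow> (\<exists>q. degree q = k \<and> (\<forall>\<tau>\<in>{0..<1/2}. pwm (1/2) k \<tau> = poly q \<tau>))
     \<and> continuous_on {0..1} (pwm (1/2) k) \<and> antip (pwm (1/2) k)"

lemma pwm1: "pwm (1/2) 1 \<tau> = (if \<tau> \<le> 1/2 then sqrt 3 * (4*\<tau> - 1) else sqrt 3 * (3 - 4*\<tau>))"
  by (simp add: One_nat_def field_simps)

lemma pwm1_ext: "pwm (1/2) 1 = (\<lambda>\<tau>. if \<tau> \<le> 1/2 then sqrt 3 * (4*\<tau> - 1) else sqrt 3 * (3 - 4*\<tau>))"
  by (rule ext) (rule pwm1)

lemma good1: "goodp 1"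
proof -
  have "\<forall>\<tau>\<in>{0..<1/2}. pwm (1/2) 1 \<tau> = poly [:-sqrt 3, 4 * sqrt 3:] \<tau>"
    by (auto simp: pwm1 algebra_simps)
  moreover have "degree [:-sqrt 3, 4 * sqrt 3:] = 1" by simp
  moreover have "continuous_on ({0..1/2} \<union> {1/2..1})
     (\<lambda>\<tau>::real. if \<tau> \<le> 1/2 then sqrt 3 * (4*\<tau> - 1) else sqrt 3 * (3 - 4*\<tau>))"
    by (rule continuous_on_cases) (auto intro!: continuous_intros)
  then have "continuous_on {0..1} (pwm (1/2) 1)"
    by (subst pwm1_ext) (simp add: ivl_disj_un_two_touch)
  moreover have "antip (pwm (1/2) 1)"
    by (auto simp: antip_def pwm1 algebra_simps)
  ultimately show ?thesis unfolding goodp_def by blast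
qed

definition psf :: "nat \<Rightarrow> real \<Rightarrow> real" where
  "psf k \<tau> = oint (1/2) \<tau> (pwm (1/2) (Suc k))"
definition pbf :: "nat \<Rightarrow> real \<Rightarrow> real" where
  "pbf k \<tau> = psf k \<tau> - (\<Sum>l<Suc (Suc k). pwm (1/2) l \<tau> * integral {0..1} (\<lambda>s. pwm (1/2) l s * psf k s))"

lemma pwm_SS: "pwm (1/2) (Suc (Suc k)) \<tau> = pbf k \<tau> / sqrt (integral {0..1} (\<lambda>s. (pbf k s)\<^sup>2))"
  by (simp add: Let_def psf_def pbf_def)


lemma good_step:
  assumes IH: "\<And>l. 1 \<le> l \<Longrightarrow> l \<le> Suc k \<Longrightarrow> goodp l"
  shows "goodp (Suc (Suc k))"
proof -
  define g where "g = pwm (1/2) (Suc k)"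
  from IH[of "Suc k"] obtain q where dq: "degree q = Suc k"
      and qg: "\<forall>\<tau>\<in>{0..<1/2}. g \<tau> = poly q \<tau>" and cg: "continuous_on {0..1} g" and ag: "antip g"
    unfolding goodp_def g_def by auto
  have q0: "q \<noteq> 0" using dq by auto
  define Ps where "Ps = (\<lambda>\<tau>. integral {0..\<tau>} g - integral {0..1/2} g)"
  note PS = ps_props[OF cg ag qg q0]
  obtain Q where dQ: "degree Q = Suc (Suc k)" and PQ: "\<forall>\<tau>\<in>{0..<1/2}. Ps \<tau> = poly Q \<tau>"
    using PS(2) dq unfolding Ps_def by auto
  obtain C where C: "\<forall>\<tau>\<in>{0..1/2}. Ps \<tau> + Ps (\<tau>+1/2) = C" and IC: "integral {0..1} Ps = C/2"
    using PS(3) unfolding Ps_def by auto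
  have psP: "psf k \<tau> = Ps \<tau>" if "\<tau> \<in> {0..1}" for \<tau>
    unfolding psf_def Ps_def g_def[symmetric] using oint_eq[OF cg that] .
  have cps: "continuous_on {0..1} (psf k)"
    using PS(1)[folded Ps_def] by (rule continuous_on_eq) (use psP in auto)
  have "\<forall>l\<in>{..<Suc k}. \<exists>ql. degree ql = Suc l \<and> (\<forall>\<tau>\<in>{0..<1/2}. pwm (1/2) (Suc l) \<tau> = poly ql \<tau>)"
    using IH unfolding goodp_def by auto
  then obtain qs where qs: "\<And>l. l < Suc k \<Longrightarrow> degree (qs l) = Suc l"
     "\<And>l \<tau>. l < Suc k \<Longrightarrow> \<tau> \<in> {0..<1/2} \<Longrightarrow> pwm (1/2) (Suc l) \<tau> = poly (qs l) \<tau>"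
    by (metis bchoice lessThan_iff)
  have cl: "continuous_on {0..1} (pwm (1/2) (Suc l))" "antip (pwm (1/2) (Suc l))" if "l < Suc k" for l
    using IH[of "Suc l"] that unfolding goodp_def by auto
  define cst where "cst l = integral {0..1} (\<lambda>s. pwm (1/2) l s * psf k s)" for l
  have cst0: "cst 0 = C/2"
  proof -
    have "cst 0 = integral {0..1} Ps" unfolding cst_def
      by (rule integral_cong) (simp add: psP)
    then show ?thesis using IC by simp
  qed
  have pb: "pbf k \<tau> = psf k \<tau> - cst 0 - (\<Sum>l<Suc k. pwm (1/2) (Suc l) \<tau> * cst (Suc l))" for \<tau>
    unfolding pbf_def cst_def[symmetric] by (subst sum.lessThan_Suc_shift) simp
  define S where "S = [:cst 0:] + (\<Sum>l<Suc k. smult (cst (Suc l)) (qs l))"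
  have dS: "degree S \<le> Suc k" unfolding S_def
    by (intro degree_add_le degree_sum_le) (auto intro: order.trans[OF degree_smult_le] simp: qs(1))
  define R where "R = Q - S"
  have dR: "degree R = Suc (Suc k)"
    using degree_add_eq_left[of "-S" Q] dS dQ unfolding R_def by simp
  have pR: "pbf k \<tau> = poly R \<tau>" if "\<tau> \<in> {0..<1/2}" for \<tau>
    using that unfolding pb R_def S_def
    by (simp add: poly_sum psP PQ qs(2) algebra_simps)
  have cpb: "continuous_on {0..1} (pbf k)"
    unfolding pb by (intro continuous_intros cps cl) auto
  have apb: "antip (pbf k)"
    unfolding antip_def
  proof
    fix \<tau> :: real assume t: "\<tau> \<in> {0..1/2}"
    have "(\<Sum>l<Suc k. pwm (1/2) (Suc l) (\<tau>+1/2) * cst (Suc l)) = - (\<Sum>l<Suc k. pwm (1/2) (Suc l) \<tau> * cst (Suc l))"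
      using cl(2) t unfolding antip_def by (simp add: sum_negf[symmetric])
    moreover have "psf k \<tau> + psf k (\<tau>+1/2) = C" using C t psP by auto
    ultimately show "pbf k (\<tau> + 1/2) = - pbf k \<tau>" unfolding pb cst0 by simp
  qed
  define I where "I = integral {0..1} (\<lambda>s. (pbf k s)\<^sup>2)"
  have csq: "continuous_on {0..1} (\<lambda>s. (pbf k s)\<^sup>2)" by (intro continuous_intros cpb)
  have "I \<ge> 0" unfolding I_def
    by (rule integral_nonneg) (auto intro: integrable_continuous_interval csq)
  moreover have "I \<noteq> 0"
  proof
    assume "I = 0"
    then have "((\<lambda>s. (pbf k s)\<^sup>2) has_integral 0) (cbox 0 1)"
      unfolding I_def using integrable_integral[OF integrable_continuous_interval[OF csq]] by simp
    then have z: "(pbf k x)\<^sup>2 = 0" if "x \<in> cbox 0 1" for x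
      using has_integral_0_cbox_imp_0[of 0 1 "\<lambda>s. (pbf k s)\<^sup>2" x] csq that by auto
    have "{0..<1/2::real} \<subseteq> {x. poly R x = 0}"
      using z pR by auto
    moreover have "R \<noteq> 0" using dR by auto
    ultimately have "finite {0..<1/2::real}" using poly_roots_finite finite_subset by blast
    then show False using infinite_Ico[of "0::real" "1/2"] by simp
  qed
  ultimately have I0: "I > 0" by simp
  have pw: "pwm (1/2) (Suc (Suc k)) = (\<lambda>\<tau>. pbf k \<tau> / sqrt I)"
    unfolding I_def by (rule ext) (rule pwm_SS)
  show ?thesis unfolding goodp_def pw
  proof (intro conjI exI[of _ "smult (1 / sqrt I) R"])
    show "degree (smult (1 / sqrt I) R) = Suc (Suc k)" using I0 dR by simp
    show "\<forall>\<tau>\<in>{0..<1/2}. pbf k \<tau> / sqrt I = poly (smult (1 / sqrt I) R) \<tau>"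
      using pR by simp
    show "continuous_on {0..1} (\<lambda>\<tau>. pbf k \<tau> / sqrt I)" by (intro continuous_intros cpb) (use I0 in auto)
    show "antip (\<lambda>\<tau>. pbf k \<tau> / sqrt I)" using apb unfolding antip_def by simp
  qed
qed


lemma all_good: "1 \<le> k \<Longrightarrow> goodp k"
proof (induction k rule: less_induct)
  case (less k)
  show ?case
  proof (cases k)
    case 0 then show ?thesis using less by simp
  next
    case (Suc j)
    show ?thesis
    proof (cases j)
      case 0 then show ?thesis using Suc good1 by simp
    next
      case (Suc i)
      then show ?thesis using \<open>k = Suc j\<close> less.IH by (auto intro!: good_step)
    qed
  qed
qed

lemma deg_drop: fixes p :: "real poly"
  assumes "degree p \<le> Suc n" "coeff p (Suc n) = 0" shows "degree p \<le> n"
proof (rule ccontr)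
  assume "\<not> degree p \<le> n"
  then have "degree p = Suc n" using assms by simp
  then have "p = 0" using assms(2) leading_coeff_0_iff by metis
  then show False using \<open>degree p = Suc n\<close> by simp
qed

lemma span:
  "\<forall>g q. degree q \<le> n \<and> (\<forall>\<tau>\<in>{0..<1/2}. g \<tau> = poly q \<tau>) \<and> g (1/2) = poly q (1/2) \<and> antip g
     \<longrightarrow> (\<exists>c. \<forall>\<tau>\<in>{0..1}. g \<tau> = (\<Sum>k=1..n. c k * pwm (1/2) k \<tau>))"
proof (induction n)
  case 0
  show ?case
  proof (intro allI impI)
    fix g :: "real \<Rightarrow> real" and q :: "real poly"
    assume as: "degree q \<le> 0 \<and> (\<forall>\<tau>\<in>{0..<1/2}. g \<tau> = poly q \<tau>) \<and> g (1/2) = poly q (1/2) \<and> antip g"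
    then obtain a where qa: "q = [:a:]" using degree_eq_zeroE by blast
    have ga: "\<forall>\<tau>\<in>{0..<1/2}. g \<tau> = a" and g12: "g (1/2) = a" using as qa by auto
    have ag0: "\<forall>\<tau>\<in>{0..1/2}. g (\<tau> + 1/2) = - g \<tau>" using as unfolding antip_def by blast
    from this[rule_format, of 0] have "g (0 + 1/2) = - g 0" by simp
    then have a0: "a = 0" using ga g12 by simp
    have "g \<tau> = 0" if "\<tau> \<in> {0..1}" for \<tau>
    proof (cases "\<tau> \<le> 1/2")
      case True
      show ?thesis
      proof (cases "\<tau> < 1/2")
        case True then show ?thesis using ga a0 that by auto
      next
        case False then have "\<tau> = 1/2" using \<open>\<tau> \<le> 1/2\<close> by linarith
        then show ?thesis using g12 a0 by metis
      qed
    next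
      case False
      have "g ((\<tau> - 1/2) + 1/2) = - g (\<tau> - 1/2)" using ag0[rule_format, of "\<tau> - 1/2"] that False by simp
      moreover have "g (\<tau> - 1/2) = 0"
      proof (cases "\<tau> < 1")
        case True then show ?thesis using ga a0 that False by auto
      next
        case False then have "\<tau> - 1/2 = 1/2" using that by auto
        then show ?thesis using g12 a0 by metis
      qed
      ultimately show ?thesis by simp
    qed
    then show "\<exists>c. \<forall>\<tau>\<in>{0..1}. g \<tau> = (\<Sum>k=1..0. c k * pwm (1/2) k \<tau>)" by simp
  qed
next
  case (Suc n)
  show ?case
  proof (intro allI impI)
    fix g :: "real \<Rightarrow> real" and q :: "real poly"
    assume as: "degree q \<le> Suc n \<and> (\<forall>\<tau>\<in>{0..<1/2}. g \<tau> = poly q \<tau>) \<and> g (1/2) = poly q (1/2) \<and> antip g"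
    have "goodp (Suc n)" by (rule all_good) simp
    then obtain qn where dqn: "degree qn = Suc n" and pqn: "\<forall>\<tau>\<in>{0..<1/2}. pwm (1/2) (Suc n) \<tau> = poly qn \<tau>"
      and cn: "continuous_on {0..1} (pwm (1/2) (Suc n))" and an: "antip (pwm (1/2) (Suc n))"
      unfolding goodp_def by blast
    have "continuous (at (1/2) within {0..1}) (pwm (1/2) (Suc n))"
      using bspec[OF continuous_on_eq_continuous_within[THEN iffD1, OF cn], of "1/2"] by simp
    then have pn12: "pwm (1/2) (Suc n) (1/2) = poly qn (1/2)" using limit_value pqn by blast
    have lc: "coeff qn (Suc n) \<noteq> 0" using dqn by (metis leading_coeff_0_iff degree_0 nat.simps(3))
    define r where "r = coeff q (Suc n) / coeff qn (Suc n)"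
    define h where "h = (\<lambda>\<tau>. g \<tau> - r * pwm (1/2) (Suc n) \<tau>)"
    define q' where "q' = q - smult r qn"
    have "degree q' \<le> Suc n" unfolding q'_def using as dqn
      by (intro degree_diff_le) (auto intro: order.trans[OF degree_smult_le])
    moreover have "coeff q' (Suc n) = 0" unfolding q'_def r_def using lc by simp
    ultimately have "degree q' \<le> n" by (rule deg_drop)
    moreover have "\<forall>\<tau>\<in>{0..<1/2}. h \<tau> = poly q' \<tau>" using as pqn unfolding h_def q'_def by simp
    moreover have "h (1/2) = poly q' (1/2)" using as pn12 unfolding h_def q'_def by simp
    moreover have "antip h" using as an unfolding h_def antip_def by (simp add: algebra_simps)
    ultimately obtain c where c: "\<forall>\<tau>\<in>{0..1}. h \<tau> = (\<Sum>k=1..n. c k * pwm (1/2) k \<tau>)"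
      using Suc.IH by blast
    define c' where "c' = c(Suc n := r)"
    have "g \<tau> = (\<Sum>k=1..Suc n. c' k * pwm (1/2) k \<tau>)" if "\<tau> \<in> {0..1}" for \<tau>
    proof -
      have e1: "(\<Sum>k=1..Suc n. c' k * pwm (1/2) k \<tau>) = (\<Sum>k=1..n. c' k * pwm (1/2) k \<tau>) + r * pwm (1/2) (Suc n) \<tau>"
        by (simp add: c'_def)
      have e2: "(\<Sum>k=1..n. c' k * pwm (1/2) k \<tau>) = (\<Sum>k=1..n. c k * pwm (1/2) k \<tau>)"
        by (rule sum.cong) (auto simp: c'_def)
      have e3: "g \<tau> - r * pwm (1/2) (Suc n) \<tau> = (\<Sum>k=1..n. c k * pwm (1/2) k \<tau>)"
        using c that unfolding h_def by auto
      show ?thesis using e1 e2 e3 by linarith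
    qed
    then show "\<exists>c. \<forall>\<tau>\<in>{0..1}. g \<tau> = (\<Sum>k=1..Suc n. c k * pwm (1/2) k \<tau>)" by blast
  qed
qed

theorem mainTheorem3:
  fixes Np :: nat and f :: "real \<Rightarrow> real"
  assumes "Np \<ge> 1"
    and "\<exists>q :: real poly. degree q \<le> Np \<and> (\<forall>\<tau>\<in>{0..<1/2}. f \<tau> = poly q \<tau>)"
    and "continuous (at (1/2) within {0..1}) f"
    and "\<forall>\<tau>\<in>{0..1/2}. f (\<tau> + 1/2) = - f \<tau>"
  shows "\<exists>c :: nat \<Rightarrow> real. \<forall>\<tau>\<in>{0..1}. f \<tau> = (\<Sum>k=1..Np. c k * pwm (1/2) k \<tau>)"
proof -
  obtain q where q: "degree q \<le> Np" "\<forall>\<tau>\<in>{0..<1/2}. f \<tau> = poly q \<tau>" using assms(2) by blast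
  have "f (1/2) = poly q (1/2)" using limit_value[OF assms(3) q(2)] .
  moreover have "antip f" using assms(4) unfolding antip_def by blast
  ultimately show ?thesis using span[of Np] q by blast
qed

end
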